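(* Let $1\le r\le n$, $A\in\mathrm{SGL}_n(\mathbb{F}_2)$, and let $\mathbf{x}_1,\ldots,\mathbf{x}_r\in\mathbb{F}_2^n$ be linearly independent with $\mathbf{x}_i^{\top}A^{-1}\mathbf{x}_j=1$ for all $i,j$. If $\sum_{i=1}^r\mathbf{x}_i\mathbf{x}_i^{\top}=\sum_{i=1}^r\mathbf{y}_i\mathbf{y}_i^{\top}$ for some $\mathbf{y}_1,\ldots,\mathbf{y}_r\in\mathbb{F}_2^n$, then $\mathbf{y}_i^{\top}A^{-1}\mathbf{y}_j=1$ for all $i,j$.
   Context: $\mathrm{SGL}_n(\mathbb{F}_2)$ is the set of invertible symmetric $n\times n$ matrices over the binary field $\mathbb{F}_2$. *)

theory Defs
  imports "HOL-Analysis.Analysis" "HOL-Library.Z2"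
begin

(* F_2 is the type bit from HOL-Library.Z2; F_2^n is bit ^ 'n, n = CARD('n). *)

definition bform :: "bit ^ 'n \<Rightarrow> bit ^ 'n ^ 'n \<Rightarrow> bit ^ 'n \<Rightarrow> bit" where
  "bform x M y = (\<Sum>k\<in>UNIV. x $ k * (M *v y) $ k)"

definition outer :: "bit ^ 'n \<Rightarrow> bit ^ 'n \<Rightarrow> bit ^ 'n ^ 'n" where
  "outer x y = (\<chi> i j. x $ i * y $ j)"

end

theory Submission imports Defs begin
definition dot :: "bit ^ 'n \<Rightarrow> bit ^ 'n \<Rightarrow> bit" where
  "dot u v = (\<Sum>k\<in>UNIV. u $ k * v $ k)"

lemma dual:
  fixes S :: "(bit ^ 'n) set"
  assumes "vec.independent S" "v \<in> S"
  shows "\<exists>u. \<forall>w\<in>S. dot w u = (if w = v then 1 else 0)"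
proof -
  obtain g where g: "Vector_Spaces.linear (*s) (*s) g"
    "\<forall>w\<in>S. g w = ((\<chi> k. if w = v then 1 else 0) :: bit ^ 'n)"
    using vec.linear_independent_extend[OF assms(1), where f="\<lambda>w. (\<chi> k. if w = v then 1 else 0) :: bit ^ 'n"] by blast
  obtain a :: 'n where True by blast
  define u where "u = (\<chi> j. matrix g $ a $ j)"
  have "dot w u = g w $ a" for w
  proof -
    have "g w $ a = (matrix g *v w) $ a" using matrix_works[OF g(1)] by simp
    also have "\<dots> = (\<Sum>j\<in>UNIV. matrix g $ a $ j * w $ j)"
      by (simp add: matrix_vector_mult_def)
    finally show ?thesis unfolding dot_def u_def vec_lambda_beta by (simp only: mult.commute)
  qed
  then show ?thesis using g(2) by (intro exI[of _ u]) simp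
qed

lemma dot_sum_left: "dot (sum f A) w = (\<Sum>i\<in>A. dot (f i) w)"
  unfolding dot_def sum_component sum_distrib_right by (rule sum.swap)

lemma dot_scale_left: "dot (c *s v) w = c * dot v w"
  unfolding dot_def by (simp only: vector_smult_component sum_distrib_left mult.assoc)

lemma dot_sum_right: "dot w (sum f A) = (\<Sum>i\<in>A. dot w (f i))"
  unfolding dot_def sum_component sum_distrib_left by (rule sum.swap)

lemma dot_scale_right: "dot w (c *s v) = c * dot w v"
  unfolding dot_def by (simp only: vector_smult_component sum_distrib_left mult.left_commute)

lemma mv_sum: "(M::bit^'n^'n) *v sum f A = (\<Sum>i\<in>A. M *v f i)"
  by (induction A rule: infinite_finite_induct) (auto simp: matrix_vector_right_distrib)

lemma mv_scale: "(M::bit^'n^'n) *v (c *s v) = c *s (M *v v)"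
  by (simp add: vec.scale)

lemma bform_dot: "bform x M y = dot x (M *v y)"
  unfolding bform_def dot_def ..

lemma outer_mv: "outer x x *v u = dot x u *s x"
proof -
  have "(outer x x *v u) $ a = (dot x u *s x) $ a" for a
  proof -
    have "(outer x x *v u) $ a = (\<Sum>b\<in>UNIV. x $ a * x $ b * u $ b)"
      unfolding outer_def matrix_vector_mult_def by (simp only: vec_lambda_beta)
    also have "\<dots> = x $ a * dot x u" unfolding dot_def sum_distrib_left
      by (simp only: mult.assoc)
    finally show ?thesis by (simp only: vector_smult_component mult.commute)
  qed
  then show ?thesis by (simp add: vec_eq_iff)
qed

lemma sum_outer_mv: "(\<Sum>i\<in>A. outer (x i) (x i)) *v u = (\<Sum>i\<in>A. dot (x i) u *s x i)"
  by (induction A rule: infinite_finite_induct) (auto simp: matrix_vector_mult_add_rdistrib outer_mv)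

lemma bit_idem: "(b::bit) * b = b"
  by (cases b) auto

lemma sum_outer_diag: "(\<Sum>i\<in>A. outer (x i) (x i)) $ k $ k = (\<Sum>i\<in>A. x i) $ k"
  unfolding sum_component outer_def vec_lambda_beta bit_idem ..


theorem lemma4p8:
  fixes A :: "bit ^ 'n ^ 'n" and r :: nat
    and x y :: "nat \<Rightarrow> bit ^ 'n"
  assumes "1 \<le> r" and "r \<le> CARD('n)"
    and "transpose A = A" and "invertible A"
    and "inj_on x {..<r}" and "vec.independent (x ` {..<r})"
    and "\<forall>i<r. \<forall>j<r. bform (x i) (matrix_inv A) (x j) = 1"
    and "(\<Sum>i<r. outer (x i) (x i)) = (\<Sum>i<r. outer (y i) (y i))"
  shows "\<forall>i<r. \<forall>j<r. bform (y i) (matrix_inv A) (y j) = 1"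
proof -
  define M where "M = (\<Sum>i<r. outer (x i) (x i))"
  define X where "X = x ` {..<r}"
  define Y where "Y = y ` {..<r}"
  have Mx: "M *v u = (\<Sum>i<r. dot (x i) u *s x i)" for u
    unfolding M_def by (rule sum_outer_mv)
  have My: "M *v u = (\<Sum>i<r. dot (y i) u *s y i)" for u
    unfolding M_def assms(8) by (rule sum_outer_mv)
  have sxy: "(\<Sum>i<r. x i) = (\<Sum>i<r. y i)"
    using sum_outer_diag[of x "{..<r}"] sum_outer_diag[of y "{..<r}"] assms(8)
    by (simp add: vec_eq_iff)
  have XY: "X \<subseteq> vec.span Y"
  proof
    fix v assume "v \<in> X"
    then obtain l where l: "l < r" "v = x l" unfolding X_def by auto
    obtain u where u: "\<forall>w\<in>X. dot w u = (if w = x l then 1 else 0)"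
      using dual[OF assms(6)] l unfolding X_def by blast
    have "M *v u = (\<Sum>i<r. (if i = l then x l else 0))"
      unfolding Mx
    proof (rule sum.cong[OF refl])
      fix i assume "i \<in> {..<r}"
      then have "dot (x i) u = (if i = l then 1 else 0)"
        using u assms(5) l unfolding X_def inj_on_def by auto
      then show "dot (x i) u *s x i = (if i = l then x l else 0)" by simp
    qed
    also have "\<dots> = x l" using l by simp
    finally have "v = M *v u" using l by simp
    also have "\<dots> \<in> vec.span Y" unfolding My Y_def
      by (intro vec.span_sum vec.span_scale vec.span_base) auto
    finally show "v \<in> vec.span Y" .
  qed
  have cX: "card X = r" unfolding X_def using card_image[OF assms(5)] by simp
  have dX: "vec.dim X = r" using vec.dim_eq_card_independent[OF assms(6)] cX X_def by simp
  have "vec.dim X \<le> vec.dim (vec.span Y)" using XY vec.dim_subset by blast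
  then have d1: "r \<le> vec.dim Y" using dX by simp
  have fY: "finite Y" unfolding Y_def by simp
  have d2: "vec.dim Y \<le> card Y" using vec.dim_le_card[OF vec.span_superset fY] .
  have cY: "card Y \<le> r" unfolding Y_def using card_image_le[of "{..<r}" y] by simp
  have cY': "card Y = r" using d1 d2 cY by simp
  have injy: "inj_on y {..<r}" using cY' inj_on_iff_eq_card[of "{..<r}" y] unfolding Y_def by simp
  have indY: "vec.independent Y"
    by (rule vec.card_le_dim_spanning[of Y Y]) (use fY d1 cY' in \<open>auto intro: vec.span_base\<close>)
  have rep: "\<exists>c. y l = (\<Sum>i<r. c i *s x i) \<and> (\<Sum>i<r. c i) = 1" if l: "l < r" for l
  proof -
    obtain w where w: "\<forall>v\<in>Y. dot v w = (if v = y l then 1 else 0)"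
      using dual[OF indY] l unfolding Y_def by blast
    have dy: "dot (y i) w = (if i = l then 1 else 0)" if "i < r" for i
      using w injy l that unfolding Y_def inj_on_def by auto
    have "M *v w = (\<Sum>i<r. (if i = l then y l else 0))"
      unfolding My by (rule sum.cong[OF refl]) (simp add: dy)
    also have "\<dots> = y l" using l by simp
    finally have e1: "y l = (\<Sum>i<r. dot (x i) w *s x i)" unfolding Mx by simp
    have "(\<Sum>i<r. dot (x i) w) = dot (\<Sum>i<r. y i) w" unfolding sxy[symmetric] dot_sum_left ..
    also have "\<dots> = (\<Sum>i<r. (if i = l then 1 else 0))" unfolding dot_sum_left
      by (rule sum.cong[OF refl]) (simp add: dy)
    also have "\<dots> = 1" using l by simp
    finally show ?thesis using e1 by (intro exI[of _ "\<lambda>i. dot (x i) w"]) simp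
  qed
  show ?thesis
  proof (intro allI impI)
    fix j k assume j: "j < r" and k: "k < r"
    obtain c where c: "y j = (\<Sum>i<r. c i *s x i)" "(\<Sum>i<r. c i) = 1" using rep[OF j] by blast
    obtain d where d: "y k = (\<Sum>i<r. d i *s x i)" "(\<Sum>i<r. d i) = 1" using rep[OF k] by blast
    have "bform (y j) (matrix_inv A) (y k)
        = (\<Sum>i<r. d i * (\<Sum>m<r. c m * bform (x m) (matrix_inv A) (x i)))"
      unfolding c d bform_dot mv_sum mv_scale dot_sum_left dot_sum_right dot_scale_left dot_scale_right ..
    also have "\<dots> = (\<Sum>i<r. d i * (\<Sum>m<r. c m))"
    proof (rule sum.cong[OF refl])
      fix i assume i: "i \<in> {..<r}"
      have "(\<Sum>m<r. c m * bform (x m) (matrix_inv A) (x i)) = (\<Sum>m<r. c m)"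
      proof (rule sum.cong[OF refl])
        fix m assume "m \<in> {..<r}"
        then have "bform (x m) (matrix_inv A) (x i) = 1" using assms(7) i by simp
        then show "c m * bform (x m) (matrix_inv A) (x i) = c m" by (simp only: mult_1_right)
      qed
      then show "d i * (\<Sum>m<r. c m * bform (x m) (matrix_inv A) (x i)) = d i * (\<Sum>m<r. c m)"
        by (simp only:)
    qed
    also have "\<dots> = 1" using c(2) d(2) by (simp only: sum_distrib_right[symmetric] mult_1)
    finally show "bform (y j) (matrix_inv A) (y k) = 1" .
  qed
qed

end
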